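(* For any constants $\beta_1, \beta_2 \in [0,1)$ with $\beta_1 < \sqrt{\beta_2}$, there exist a one-dimensional online convex optimization problem (a compact convex feasible set $\mathcal{F} \subset \mathbb{R}$ and a sequence of convex loss functions $f_t$ with uniformly bounded gradients) and an initial point $x_1 \in \mathcal{F}$ such that, for every initial step size $\alpha > 0$, the iterates of \textsc{Adam} with parameters $\alpha, \beta_1, \beta_2$ satisfy $R_T/T \not\to 0$ as $T \to \infty$.
   Context: \textsc{Adam} (without debiasing) on a closed convex set $\mathcal{F} \subset \mathbb{R}^d$ with loss functions $f_1, f_2, \dots$, initial point $x_1 \in \mathcal{F}$, initial step size $\alpha > 0$ and constants $\beta_1, \beta_2 \in [0,1)$ is defined as follows. Set $m_0 = v_0 = 0 \in \mathbb{R}^d$. For $t = 1, 2, \dots$: $g_t = \nabla f_t(x_t)$; $m_t = \beta_1 m_{t-1} + (1-\beta_1) g_t$; $v_t = \beta_2 v_{t-1} + (1-\beta_2) g_t^2$ (square taken coordinatewise); $V_t = \mathrm{diag}(v_t)$; $\alpha_t = \alpha/\sqrt{t}$; $\hat{x}_{t+1} = x_t - \alpha_t V_t^{-1/2} m_t$; $x_{t+1} = \Pi_{\mathcal{F}, \sqrt{V_t}}(\hat{x}_{t+1})$, where for a positive definite matrix $M$, $\Pi_{\mathcal{F}, M}(y) = \arg\min_{x \in \mathcal{F}} \|M^{1/2}(x-y)\|$. The regret after $T$ steps is $R_T = \sum_{t=1}^T f_t(x_t) - \min_{x \in \mathcal{F}} \sum_{t=1}^T f_t(x)$. *)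

theory Defs
  imports "HOL-Analysis.Analysis"
begin

text \<open>Weighted projection onto F (one-dimensional): for the 1x1 positive definite
  matrix V = diag(v), Pi_{F,sqrt V}(y) = argmin over x in F of |(sqrt V)^(1/2) (x - y)|,
  where (sqrt V)^(1/2) = v powr (1/4).\<close>
definition wproj :: "real set \<Rightarrow> real \<Rightarrow> real \<Rightarrow> real" where
  "wproj F M y = (THE x. x \<in> F \<and> (\<forall>z\<in>F. \<bar>sqrt M * (x - y)\<bar> \<le> \<bar>sqrt M * (z - y)\<bar>))"

text \<open>Adam without debiasing, one-dimensional. adam_state a b1 b2 f F x1 n = (x_{n+1}, m_n, v_n).\<close>
fun adam_state :: "real \<Rightarrow> real \<Rightarrow> real \<Rightarrow> (nat \<Rightarrow> real \<Rightarrow> real) \<Rightarrow> real set \<Rightarrow> real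
    \<Rightarrow> nat \<Rightarrow> real \<times> real \<times> real" where
  "adam_state a b1 b2 f F x1 0 = (x1, 0, 0)"
| "adam_state a b1 b2 f F x1 (Suc n) =
    (let (x, m, v) = adam_state a b1 b2 f F x1 n;
         t = Suc n;
         g = deriv (f t) x;
         m' = b1 * m + (1 - b1) * g;
         v' = b2 * v + (1 - b2) * g ^ 2;
         stp = a / sqrt (real t);
         xh = x - stp * m' / sqrt v'
     in (wproj F (sqrt v') xh, m', v'))"

definition adam_x :: "real \<Rightarrow> real \<Rightarrow> real \<Rightarrow> (nat \<Rightarrow> real \<Rightarrow> real) \<Rightarrow> real set \<Rightarrow> real
    \<Rightarrow> nat \<Rightarrow> real" where
  "adam_x a b1 b2 f F x1 t = fst (adam_state a b1 b2 f F x1 (t - 1))"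

definition adam_regret :: "real \<Rightarrow> real \<Rightarrow> real \<Rightarrow> (nat \<Rightarrow> real \<Rightarrow> real) \<Rightarrow> real set \<Rightarrow> real
    \<Rightarrow> nat \<Rightarrow> real" where
  "adam_regret a b1 b2 f F x1 T =
     (\<Sum>t=1..T. f t (adam_x a b1 b2 f F x1 t)) - (INF x\<in>F. \<Sum>t=1..T. f t x)"

end

theory Submission
  imports Defs
begin


definition gcx :: "nat \<Rightarrow> nat \<Rightarrow> real" where
  "gcx p t = (if (t - 1) mod p = 0 then real p else -1)"

definition fcx :: "nat \<Rightarrow> nat \<Rightarrow> real \<Rightarrow> real" where
  "fcx p t x = gcx p t * x"

lemma deriv_fcx: "deriv (fcx p t) x = gcx p t"
proof -
  have "(fcx p t has_real_derivative gcx p t) (at x)"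
    unfolding fcx_def[abs_def] by (auto intro!: derivative_eq_intros)
  thus ?thesis by (rule DERIV_imp_deriv)
qed

lemma diff_fcx: "fcx p t differentiable (at x)"
  unfolding fcx_def[abs_def] by (auto intro!: derivative_intros)

lemma convex_fcx: "convex_on UNIV (fcx p t)"
  unfolding convex_on_def fcx_def by (auto simp: algebra_simps)

lemma wproj_clamp:
  assumes "M > 0"
  shows "wproj {-1..1} M y = max (-1) (min 1 y)"
  unfolding wproj_def
proof (rule the_equality)
  have s: "sqrt M > 0" using assms by simp
  show "max (-1) (min 1 y) \<in> {-1..1} \<and> (\<forall>z\<in>{-1..1}. \<bar>sqrt M * (max (-1) (min 1 y) - y)\<bar> \<le> \<bar>sqrt M * (z - y)\<bar>)"
    using s by (auto simp: abs_mult mult_le_cancel_left_pos)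
  fix x assume h: "x \<in> {-1..1} \<and> (\<forall>z\<in>{-1..1}. \<bar>sqrt M * (x - y)\<bar> \<le> \<bar>sqrt M * (z - y)\<bar>)"
  hence "\<bar>x - y\<bar> \<le> \<bar>max (-1) (min 1 y) - y\<bar>" using s
    by (auto simp: abs_mult mult_le_cancel_left_pos dest!: bspec[where x="max (-1) (min 1 y)"])
  thus "x = max (-1) (min 1 y)" using h by (auto simp: abs_if split: if_splits)
qed



locale cex =
  fixes b1 b2 \<alpha> :: real and K :: nat
  assumes b1: "0 \<le> b1" "b1 < 1" and b2: "0 < b2" "b2 < 1" and rr: "b1 < sqrt b2"
    and al: "\<alpha> > 0" and K1: "K \<ge> 1"
begin

definition "p = 2 * K"
definition "C = real p"
definition "st n = adam_state \<alpha> b1 b2 (fcx p) {-1..1} 0 n"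
definition "X n = fst (st n)"
definition "Mm n = fst (snd (st n))"
definition "V n = snd (snd (st n))"
definition "g t = gcx p t"

lemma st0: "X 0 = 0" "Mm 0 = 0" "V 0 = 0"
  by (simp_all add: X_def Mm_def V_def st_def)

lemma stS:
  "Mm (Suc n) = b1 * Mm n + (1 - b1) * g (Suc n)"
  "V (Suc n) = b2 * V n + (1 - b2) * (g (Suc n))^2"
  "X (Suc n) = wproj {-1..1} (sqrt (V (Suc n))) (X n - \<alpha> / sqrt (real (Suc n)) * Mm (Suc n) / sqrt (V (Suc n)))"
  by (simp_all add: X_def Mm_def V_def st_def g_def deriv_fcx Let_def split: prod.split)

end


context cex begin

lemma p2: "p \<ge> 2" using K1 by (simp add: p_def)
lemma C1: "C \<ge> 1" using p2 by (simp add: C_def)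

lemma gS: "g (Suc n) = (if n mod p = 0 then C else -1)"
  by (simp add: g_def gcx_def C_def)

lemma modA: "n \<ge> 1 \<Longrightarrow> n mod p = 0 \<Longrightarrow> (n - 1) mod p = p - 1"
proof -
  assume "n \<ge> 1" "n mod p = 0"
  then obtain m where m: "n = Suc m" by (cases n) auto
  have "Suc m mod p = (if Suc (m mod p) = p then 0 else Suc (m mod p))" by (rule mod_Suc)
  moreover have "m mod p < p" using p2 by simp
  ultimately show ?thesis using \<open>n mod p = 0\<close> m by (auto split: if_splits)
qed

lemma modB: "n \<ge> 1 \<Longrightarrow> n mod p \<noteq> 0 \<Longrightarrow> n mod p = (n - 1) mod p + 1"
proof -
  assume "n \<ge> 1" "n mod p \<noteq> 0"
  then obtain m where m: "n = Suc m" by (cases n) auto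
  have "Suc m mod p = (if Suc (m mod p) = p then 0 else Suc (m mod p))" by (rule mod_Suc)
  thus ?thesis using \<open>n mod p \<noteq> 0\<close> m by (auto split: if_splits)
qed

definition "kk n = (n - 1) mod p"
definition "A k = (1 - b1) * C * b1 ^ k / (1 - b1 ^ p)"

lemma b1p: "b1 ^ p < 1" "0 \<le> b1 ^ p" "b1 ^ p \<le> b1"
proof -
  show "b1 ^ p < 1" using b1 p2 by (simp add: power_less_one_iff)
  show "0 \<le> b1 ^ p" using b1 by simp
  show "b1 ^ p \<le> b1" using b1 p2 by (metis One_nat_def le_trans less_imp_le one_le_numeral power_decreasing power_one_right)
qed

lemma mbound: "n \<ge> 1 \<Longrightarrow> Mm n \<le> A (kk n) - (if kk n \<ge> 1 then 1 - b1 else 0)"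
proof (induction n rule: dec_induct)
  case base
  have d: "0 < 1 - b1 ^ p" "1 - b1 ^ p \<le> 1" using b1p by auto
  have x0: "0 \<le> (1 - b1) * C" using b1 C1 by simp
  have "(1 - b1) * C * (1 - b1 ^ p) \<le> (1 - b1) * C" using d x0 by (simp add: mult_left_le)
  hence "(1 - b1) * C \<le> (1 - b1) * C / (1 - b1 ^ p)" using d by (simp add: le_divide_eq)
  thus ?case using p2 by (simp add: stS st0 gS A_def kk_def)
next
  case (step n)
  have IH: "Mm n \<le> A (kk n) - (if kk n \<ge> 1 then 1 - b1 else 0)" by fact
  have IH': "b1 * Mm n \<le> b1 * A (kk n)"
    using IH b1 by (intro mult_left_mono) (auto split: if_splits)
  show ?case
  proof (cases "n mod p = 0")
    case True
    have k: "kk n = p - 1" using modA[OF step(1) True] by (simp add: kk_def)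
    have k2: "kk (Suc n) = 0" using True by (simp add: kk_def)
    have "b1 * A (p - 1) + (1 - b1) * C = A 0"
    proof -
      obtain q where q: "p = Suc q" using p2 by (cases p) auto
      have "1 - b1 * b1 ^ q \<noteq> 0" using b1p q by auto
      thus ?thesis unfolding A_def q by (simp add: field_simps)
    qed
    thus ?thesis using IH' k k2 True by (simp add: stS gS)
  next
    case False
    have k2: "kk (Suc n) = kk n + 1" using modB[OF step(1) False] by (simp add: kk_def)
    have "b1 * A (kk n) = A (kk n + 1)" unfolding A_def by (simp add: field_simps)
    thus ?thesis using IH' k2 False by (simp add: stS gS)
  qed
qed

lemma vbound: "n \<ge> 1 \<Longrightarrow> (1 - b2) * C^2 * b2 ^ (kk n) \<le> V n \<and> V n \<le> C^2 * b2 ^ (kk n) + 1"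
proof (induction n rule: dec_induct)
  case base
  have "(1 - b2) * C^2 \<le> C^2" using b2 by (simp add: mult_left_le_one_le)
  hence "(1 - b2) * C^2 \<le> C^2 + 1" by simp
  thus ?case using b2 C1 by (simp add: stS st0 gS kk_def)
next
  case (step n)
  have IH: "(1 - b2) * C^2 * b2 ^ (kk n) \<le> V n" "V n \<le> C^2 * b2 ^ (kk n) + 1" using step(3) by auto
  have V0: "0 \<le> V n" using IH(1) b2 by (meson dual_order.trans mult_nonneg_nonneg zero_le_power2 less_imp_le diff_ge_0_iff_ge zero_le_power)
  show ?case
  proof (cases "n mod p = 0")
    case True
    have k2: "kk (Suc n) = 0" using True by (simp add: kk_def)
    have "b2 ^ kk n \<le> 1" using b2 by (simp add: power_le_one)
    hence "C^2 * b2 ^ (kk n) \<le> C^2" by (simp add: mult_left_le)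
    hence "b2 * V n \<le> b2 * (C^2 + 1)" using IH(2) b2 by (intro mult_left_mono) auto
    hence "b2 * V n + (1 - b2) * C^2 \<le> C^2 + 1" using b2 by (simp add: algebra_simps)
    moreover have "(1 - b2) * C^2 \<le> b2 * V n + (1 - b2) * C^2" using V0 b2 by simp
    ultimately show ?thesis using k2 True by (simp add: stS gS)
  next
    case False
    have k2: "kk (Suc n) = kk n + 1" using modB[OF step(1) False] by (simp add: kk_def)
    have "b2 * ((1 - b2) * C^2 * b2 ^ (kk n)) \<le> b2 * V n" using IH(1) b2 by (intro mult_left_mono) auto
    moreover have "b2 * V n \<le> b2 * (C^2 * b2 ^ (kk n) + 1)" using IH(2) b2 by (intro mult_left_mono) auto
    ultimately show ?thesis using k2 False b2 by (simp add: stS gS algebra_simps)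
  qed
qed

end


locale cex2 = cex +
  assumes Kv: "b2 ^ K * (2 * real K)^2 \<le> 1"
    and Kup: "real K * (1 - b1) / 4 \<ge> 1 / (sqrt (1 - b2) * (1 - b1 / sqrt b2)) + 1"
begin

definition "r = b1 / sqrt b2"
definition "B = 1 / (sqrt (1 - b2) * (1 - r))"
definition "E n = \<alpha> / sqrt (real n) * Mm n / sqrt (V n)"

lemma r01: "0 \<le> r" "r < 1" using b1 b2 rr by (auto simp: r_def)
lemma Bpos: "B > 0" using r01 b2 by (simp add: B_def)
lemma KupB: "real K * (1 - b1) / 4 \<ge> B + 1" using Kup by (simp add: B_def r_def)

lemma Vpos: "n \<ge> 1 \<Longrightarrow> V n > 0"
proof -
  assume n: "n \<ge> 1"
  have "0 < (1 - b2) * C^2 * b2 ^ (kk n)" using b2 C1 by simp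
  thus ?thesis using vbound[OF n] by linarith
qed

lemma Xstep: "X (Suc n) = max (-1) (min 1 (X n - E (Suc n)))"
  using Vpos[of "Suc n"] by (simp add: stS(3)[of n] wproj_clamp E_def)

lemma Xrange: "-1 \<le> X n \<and> X n \<le> 1"
  by (cases n) (auto simp: st0 Xstep)

lemma MV_bound:
  assumes n: "n \<ge> 1"
  shows "Mm n / sqrt (V n) \<le> r ^ (kk n) / sqrt (1 - b2) - (if kk n \<ge> K then (1 - b1) / 2 else 0)"
proof -
  define k where "k = kk n"
  define s where "s = (if k \<ge> 1 then 1 - b1 else 0)"
  have Vp: "V n > 0" using Vpos[OF n] .
  have sV: "sqrt (V n) > 0" using Vp by simp
  have m: "Mm n \<le> A k - s" using mbound[OF n] by (simp add: k_def s_def)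
  have vb: "(1 - b2) * C^2 * b2 ^ k \<le> V n" "V n \<le> C^2 * b2 ^ k + 1" using vbound[OF n] by (auto simp: k_def)
  have s0: "0 \<le> s" using b1 by (simp add: s_def)
  have A0: "0 \<le> A k" using b1 b1p C1 by (simp add: A_def)
  have "Mm n / sqrt (V n) \<le> (A k - s) / sqrt (V n)" using m sV by (simp add: divide_right_mono)
  also have "\<dots> = A k / sqrt (V n) - s / sqrt (V n)" by (simp add: diff_divide_distrib)
  finally have step1: "Mm n / sqrt (V n) \<le> A k / sqrt (V n) - s / sqrt (V n)" .
  have den: "0 < sqrt (1 - b2) * C * sqrt b2 ^ k" using b2 C1 by simp
  have sq: "sqrt ((1 - b2) * C^2 * b2 ^ k) = sqrt (1 - b2) * C * sqrt b2 ^ k"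
    using C1 by (simp add: real_sqrt_mult real_sqrt_power)
  have "sqrt (1 - b2) * C * sqrt b2 ^ k \<le> sqrt (V n)" using vb(1) sq by (metis real_sqrt_le_mono)
  hence "A k / sqrt (V n) \<le> A k / (sqrt (1 - b2) * C * sqrt b2 ^ k)"
    using A0 den sV by (intro divide_left_mono) auto
  also have "\<dots> = ((1 - b1) / (1 - b1 ^ p)) * (r ^ k / sqrt (1 - b2))"
  proof -
    have nz: "C \<noteq> 0" "sqrt (1 - b2) \<noteq> 0" "sqrt b2 ^ k \<noteq> 0" "1 - b1 ^ p \<noteq> 0"
      using C1 b2 b1p by auto
    show ?thesis unfolding A_def r_def power_divide using nz b2 by (simp add: divide_simps)
  qed
  also have "\<dots> \<le> r ^ k / sqrt (1 - b2)"
  proof -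
    have y1: "(1 - b1) / (1 - b1 ^ p) \<le> 1" using b1p by simp
    have y0: "0 \<le> (1 - b1) / (1 - b1 ^ p)" using b1p b1 by simp
    have x0: "0 \<le> r ^ k / sqrt (1 - b2)" using r01 b2 by simp
    show ?thesis by (rule mult_left_le_one_le[OF x0 y0 y1])
  qed
  finally have step2: "A k / sqrt (V n) \<le> r ^ k / sqrt (1 - b2)" .
  have step3: "s / sqrt (V n) \<ge> (if k \<ge> K then (1 - b1) / 2 else 0)"
  proof (cases "k \<ge> K")
    case True
    have "b2 ^ k \<le> b2 ^ K" using True b2 by (simp add: power_decreasing)
    hence "C^2 * b2 ^ k \<le> C^2 * b2 ^ K" by (simp add: mult_left_mono)
    also have "C^2 * b2 ^ K \<le> 1" using Kv by (simp add: C_def p_def mult.commute)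
    finally have "V n \<le> 4" using vb(2) by simp
    hence "sqrt (V n) \<le> 2" using real_sqrt_le_mono[of "V n" 4] by simp
    moreover have "s = 1 - b1" using True K1 by (simp add: s_def)
    ultimately have "s / 2 \<le> s / sqrt (V n)" using sV b1 by (intro divide_left_mono) auto
    hence "(1 - b1) / 2 \<le> s / sqrt (V n)" using \<open>s = 1 - b1\<close> by simp
    thus ?thesis using True by simp
  next
    case False
    thus ?thesis using s0 sV by simp
  qed
  show ?thesis using step1 step2 step3 by (simp add: k_def)
qed

lemma E_bound:
  assumes n: "n \<ge> 1"
  shows "E n \<le> \<alpha> / sqrt (real n) * (r ^ (kk n) / sqrt (1 - b2) - (if kk n \<ge> K then (1 - b1) / 2 else 0))"
proof -
  have "E n = \<alpha> / sqrt (real n) * (Mm n / sqrt (V n))" by (simp add: E_def)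
  also have "\<dots> \<le> \<alpha> / sqrt (real n) * (r ^ (kk n) / sqrt (1 - b2) - (if kk n \<ge> K then (1 - b1) / 2 else 0))"
    using MV_bound[OF n] al by (intro mult_left_mono) auto
  finally show ?thesis .
qed

end


context cex2 begin

lemma chain: "X (i + l) \<ge> min (X i - (\<Sum>k<l. E (i + 1 + k))) (1 - (\<Sum>k<l. max (E (i + 1 + k)) 0))"
proof (induction l)
  case 0 thus ?case by simp
next
  case (Suc l)
  define S where "S = (\<Sum>k<l. E (i + 1 + k))"
  define P where "P = (\<Sum>k<l. max (E (i + 1 + k)) 0)"
  define e where "e = E (i + 1 + l)"
  have IH: "X (i + l) \<ge> min (X i - S) (1 - P)" using Suc by (simp add: S_def P_def)
  have st: "X (i + Suc l) = max (-1) (min 1 (X (i + l) - e))" using Xstep[of "i + l"] by (simp add: e_def)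
  have P0: "0 \<le> P" unfolding P_def by (intro sum_nonneg) auto
  have h: "X (i + Suc l) \<ge> min 1 (X (i + l) - e)" using st by simp
  have "min 1 (X (i + l) - e) \<ge> min (X i - (S + e)) (1 - (P + max e 0))"
    using IH P0 by (auto simp: min_def max_def split: if_splits)
  hence "X (i + Suc l) \<ge> min (X i - (S + e)) (1 - (P + max e 0))" using h by linarith
  thus ?case by (simp add: S_def P_def e_def)
qed

definition "a j = \<alpha> / sqrt (real (j * p + 1))"

lemma onepos[simp]: "0 < 1 + real j * real p" "0 < 1 + (real j * real p + real k)"
proof -
  have "0 \<le> real j * real p" by simp
  moreover have "0 \<le> real k" by simp
  ultimately show "0 < 1 + real j * real p" "0 < 1 + (real j * real p + real k)" by linarith+
qed

lemma sqpos[simp]: "0 < sqrt (1 + real j * real p)" "0 < sqrt (1 + (real j * real p + real k))"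
proof -
  have "0 \<le> real j * real p" by simp
  moreover have "0 \<le> real k" by simp
  ultimately have "0 < 1 + real j * real p" "0 < 1 + (real j * real p + real k)" by linarith+
  thus "0 < sqrt (1 + real j * real p)" "0 < sqrt (1 + (real j * real p + real k))" by simp_all
qed

lemma a_pos: "a j > 0" using al sqpos(1)[of j] unfolding a_def by (simp del: sqpos)

lemma a_mono: "j \<le> j' \<Longrightarrow> a j' \<le> a j"
proof -
  assume "j \<le> j'"
  hence "real (j * p + 1) \<le> real (j' * p + 1)" by (simp add: mult_right_mono)
  hence "sqrt (real (j * p + 1)) \<le> sqrt (real (j' * p + 1))" by simp
  thus ?thesis using al unfolding a_def by (intro divide_left_mono mult_pos_pos) auto
qed

lemma kk_per: "k < p \<Longrightarrow> kk (j * p + 1 + k) = k"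
  by (simp add: kk_def)

lemma E_per:
  assumes j: "j \<ge> 1" and k: "k < p"
  shows "E (j * p + 1 + k) \<le> a j * r ^ k / sqrt (1 - b2) - (if K \<le> k then a j * (1 - b1) / 4 else 0)"
proof -
  define c where "c = \<alpha> / sqrt (real (j * p + 1 + k))"
  define u where "u = r ^ k / sqrt (1 - b2)"
  define w where "w = (if K \<le> k then (1 - b1) / 2 else 0)"
  have Eb: "E (j * p + 1 + k) \<le> c * (u - w)"
    using E_bound[of "j * p + 1 + k"] kk_per[OF k, of j] by (simp add: c_def u_def w_def)
  have u0: "0 \<le> u" using r01 b2 by (simp add: u_def)
  have w0: "0 \<le> w" using b1 by (simp add: w_def)
  have c1: "c \<le> a j"
  proof -
    have "sqrt (real (j * p + 1)) \<le> sqrt (real (j * p + 1 + k))" by simp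
    thus ?thesis using al unfolding a_def c_def by (intro divide_left_mono mult_pos_pos) auto
  qed
  have c2: "a j / 2 \<le> c"
  proof -
    have "p \<le> j * p" using j by simp
    moreover have "4 * (j * p + 1) = 4 * (j * p) + 4" by simp
    ultimately have "j * p + 1 + k \<le> 4 * (j * p + 1)" using k by linarith
    hence "real (j * p + 1 + k) \<le> real (4 * (j * p + 1))" by (simp only: of_nat_le_iff)
    hence "real (j * p + 1 + k) \<le> 4 * real (j * p + 1)" by simp
    hence "sqrt (real (j * p + 1 + k)) \<le> sqrt (4 * real (j * p + 1))" by (rule real_sqrt_le_mono)
    also have "\<dots> = sqrt 4 * sqrt (real (j * p + 1))" by (rule real_sqrt_mult)
    also have "\<dots> = 2 * sqrt (real (j * p + 1))" by simp
    finally have "sqrt (real (j * p + 1 + k)) \<le> 2 * sqrt (real (j * p + 1))" .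
    hence "\<alpha> / (2 * sqrt (real (j * p + 1))) \<le> c" unfolding c_def using al
      by (intro divide_left_mono mult_pos_pos) auto
    thus ?thesis by (simp add: a_def)
  qed
  have "c * (u - w) = c * u - c * w" by (simp add: algebra_simps)
  also have "c * u \<le> a j * u" using c1 u0 by (simp add: mult_right_mono)
  also have "c * w \<ge> a j / 2 * w" using c2 w0 by (rule mult_right_mono)
  hence "a j * u - c * w \<le> a j * u - a j / 2 * w" by simp
  finally have "E (j * p + 1 + k) \<le> a j * u - a j / 2 * w" using Eb by simp
  thus ?thesis by (cases "K \<le> k") (simp_all add: u_def w_def)
qed

lemma geo: "(\<Sum>k<l. r ^ k) \<le> 1 / (1 - r)"
proof -
  have "(\<Sum>k<l. r ^ k) = (1 - r ^ l) / (1 - r)" using r01 by (simp add: sum_gp_strict)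
  also have "\<dots> \<le> 1 / (1 - r)" using r01 by (intro divide_right_mono) auto
  finally show ?thesis .
qed

lemma pos_per:
  assumes j: "j \<ge> 1" and l: "l \<le> p"
  shows "(\<Sum>k<l. max (E (j * p + 1 + k)) 0) \<le> a j * B"
proof -
  have "(\<Sum>k<l. max (E (j * p + 1 + k)) 0) \<le> (\<Sum>k<l. a j / sqrt (1 - b2) * r ^ k)"
  proof (rule sum_mono)
    fix k assume "k \<in> {..<l}"
    hence k: "k < p" using l by simp
    have "0 \<le> a j * r ^ k / sqrt (1 - b2)" using a_pos[of j] r01 b2 by simp
    moreover have "E (j * p + 1 + k) \<le> a j * r ^ k / sqrt (1 - b2)"
    proof -
      have "0 \<le> a j * (1 - b1) / 4" using a_pos[of j] b1 by simp
      thus ?thesis using E_per[OF j k] by (auto split: if_splits)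
    qed
    ultimately show "max (E (j * p + 1 + k)) 0 \<le> a j / sqrt (1 - b2) * r ^ k" by simp
  qed
  also have "\<dots> = a j / sqrt (1 - b2) * (\<Sum>k<l. r ^ k)" by (simp add: sum_distrib_left)
  also have "\<dots> \<le> a j / sqrt (1 - b2) * (1 / (1 - r))"
    using a_pos[of j] b2 by (intro mult_left_mono[OF geo]) auto
  also have "\<dots> = a j * B" by (simp add: B_def)
  finally show ?thesis .
qed

lemma cntK: "(\<Sum>k<p. (if K \<le> k then c else 0)) = c * real K"
proof -
  have "(\<Sum>k<p. (if K \<le> k then c else 0)) = (\<Sum>k\<in>{k\<in>{..<p}. K \<le> k}. c)"
    by (rule sum.inter_filter[symmetric]) simp
  also have "{k\<in>{..<p}. K \<le> k} = {K..<p}" by auto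
  finally show ?thesis by (simp add: p_def)
qed

lemma tot_per:
  assumes j: "j \<ge> 1"
  shows "(\<Sum>k<p. E (j * p + 1 + k)) \<le> - a j"
proof -
  have "(\<Sum>k<p. E (j * p + 1 + k)) \<le> (\<Sum>k<p. a j / sqrt (1 - b2) * r ^ k - (if K \<le> k then a j * (1 - b1) / 4 else 0))"
    using E_per[OF j] by (intro sum_mono) auto
  also have "\<dots> = a j / sqrt (1 - b2) * (\<Sum>k<p. r ^ k) - a j * (1 - b1) / 4 * real K"
    by (simp add: sum_subtractf sum_distrib_left cntK)
  also have "\<dots> \<le> a j / sqrt (1 - b2) * (1 / (1 - r)) - a j * (1 - b1) / 4 * real K"
  proof -
    have "a j / sqrt (1 - b2) * (\<Sum>k<p. r ^ k) \<le> a j / sqrt (1 - b2) * (1 / (1 - r))"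
      using a_pos[of j] b2 by (intro mult_left_mono[OF geo]) auto
    thus ?thesis by (rule diff_right_mono)
  qed
  also have "\<dots> = a j * (B - real K * (1 - b1) / 4)" by (simp add: B_def algebra_simps)
  also have "\<dots> \<le> a j * (- 1)" using KupB a_pos[of j] by (intro mult_left_mono) auto
  finally show ?thesis by simp
qed

definition "y j = X (j * p)"

lemma y_step: "j \<ge> 1 \<Longrightarrow> y (Suc j) \<ge> min (y j + a j) (1 - a j * B)"
proof -
  assume j: "j \<ge> 1"
  have "X (j * p + p) \<ge> min (X (j * p) - (\<Sum>k<p. E (j * p + 1 + k))) (1 - (\<Sum>k<p. max (E (j * p + 1 + k)) 0))"
    by (rule chain)
  moreover have "X (j * p) - (\<Sum>k<p. E (j * p + 1 + k)) \<ge> y j + a j" using tot_per[OF j] by (simp add: y_def)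
  moreover have "1 - (\<Sum>k<p. max (E (j * p + 1 + k)) 0) \<ge> 1 - a j * B" using pos_per[OF j, of p] by simp
  ultimately show ?thesis by (simp add: y_def add.commute)
qed

lemma in_per: "j \<ge> 1 \<Longrightarrow> l \<le> p \<Longrightarrow> X (j * p + l) \<ge> y j - a j * B"
proof -
  assume j: "j \<ge> 1" and l: "l \<le> p"
  have c: "X (j * p + l) \<ge> min (X (j * p) - (\<Sum>k<l. E (j * p + 1 + k))) (1 - (\<Sum>k<l. max (E (j * p + 1 + k)) 0))"
    by (rule chain)
  have "(\<Sum>k<l. E (j * p + 1 + k)) \<le> (\<Sum>k<l. max (E (j * p + 1 + k)) 0)" by (intro sum_mono) auto
  moreover have "(\<Sum>k<l. max (E (j * p + 1 + k)) 0) \<le> a j * B" by (rule pos_per[OF j l])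
  moreover have "X (j * p) \<le> 1" using Xrange by auto
  ultimately show ?thesis using c by (simp add: y_def)
qed

end


context cex2 begin

lemma high:
  assumes d: "\<delta> > 0"
  shows "\<exists>N. \<forall>n \<ge> N. X n \<ge> 1 - \<delta>"
proof -
  define j0 where "j0 = nat \<lceil>(2 * \<alpha> * B / \<delta>)^2\<rceil> + 1"
  have j0_1: "j0 \<ge> 1" by (simp add: j0_def)
  have aj0: "a j0 * B \<le> \<delta> / 2"
  proof -
    have "(2 * \<alpha> * B / \<delta>)^2 \<le> real j0" unfolding j0_def by linarith
    also have "real j0 \<le> real (j0 * p + 1)"
    proof -
      have "j0 \<le> j0 * p" using p2 by simp
      hence "j0 \<le> j0 * p + 1" by linarith
      thus ?thesis by (simp only: of_nat_le_iff)
    qed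
    finally have "sqrt ((2 * \<alpha> * B / \<delta>)^2) \<le> sqrt (real (j0 * p + 1))" by (rule real_sqrt_le_mono)
    hence h: "2 * \<alpha> * B / \<delta> \<le> sqrt (real (j0 * p + 1))" using al Bpos d by simp
    have pos: "0 < 2 * \<alpha> * B / \<delta>" using al Bpos d by simp
    have "a j0 \<le> \<alpha> / (2 * \<alpha> * B / \<delta>)" unfolding a_def using al pos h
      by (intro divide_left_mono mult_pos_pos) auto
    also have "\<dots> = \<delta> / (2 * B)" using al by simp
    finally have "a j0 \<le> \<delta> / (2 * B)" .
    hence "a j0 * B \<le> \<delta> / (2 * B) * B" using Bpos by (intro mult_right_mono) auto
    thus ?thesis using Bpos by simp
  qed
  have ajB: "j \<ge> j0 \<Longrightarrow> a j * B \<le> \<delta> / 2" for j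
    using a_mono[of j0 j] Bpos aj0 by (meson less_imp_le mult_right_mono order_trans)
  have ystep: "j \<ge> j0 \<Longrightarrow> y (Suc j) \<ge> min (y j + a j) (1 - \<delta> / 2)" for j
    using y_step[of j] j0_1 ajB[of j] by linarith
  have grow: "y (j0 + n) \<ge> min (1 - \<delta> / 2) (y j0 + real n * a (j0 + n))" for n
  proof (induction n)
    case 0 thus ?case by simp
  next
    case (Suc n)
    have am: "a (j0 + Suc n) \<le> a (j0 + n)" by (rule a_mono) simp
    have "real (Suc n) * a (j0 + Suc n) \<le> real (Suc n) * a (j0 + n)" using am by (intro mult_left_mono) auto
    hence "y j0 + real (Suc n) * a (j0 + Suc n) \<le> y j0 + real n * a (j0 + n) + a (j0 + n)" by (simp add: algebra_simps)
    moreover have "y (Suc (j0 + n)) \<ge> min (y (j0 + n) + a (j0 + n)) (1 - \<delta> / 2)" by (rule ystep) simp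
    moreover note Suc a_pos[of "j0 + n"]
    ultimately show ?case by (auto simp: min_def split: if_splits)
  qed
  define n where "n = j0 * p + 1 + nat \<lceil>8 * real p / \<alpha>^2\<rceil>"
  have n1: "n \<ge> j0 * p + 1" "real n \<ge> 8 * real p / \<alpha>^2" unfolding n_def by linarith+
  have big: "real n * a (j0 + n) \<ge> 2"
  proof -
    have "(j0 + n) * p + 1 \<le> 2 * n * p"
    proof -
      have "(j0 + n) * p + 1 = j0 * p + 1 + n * p" by (simp add: algebra_simps)
      also have "\<dots> \<le> n + n * p" using n1 by simp
      also have "\<dots> \<le> 2 * n * p" using p2 by (simp add: algebra_simps)
      finally show ?thesis .
    qed
    hence "real ((j0 + n) * p + 1) \<le> real (2 * n * p)" by (simp only: of_nat_le_iff)
    hence s1: "sqrt (real ((j0 + n) * p + 1)) \<le> sqrt (2 * real n * real p)" by simp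
    have "8 * real p \<le> real n * \<alpha>^2" using n1(2) al by (simp add: field_simps)
    hence "real n * (8 * real p) \<le> real n * (real n * \<alpha>^2)" by (intro mult_left_mono) auto
    hence "8 * real n * real p \<le> (real n * \<alpha>)^2" by (simp add: power2_eq_square algebra_simps)
    hence "sqrt (8 * real n * real p) \<le> sqrt ((real n * \<alpha>)^2)" by (rule real_sqrt_le_mono)
    hence "sqrt (8 * real n * real p) \<le> real n * \<alpha>" using al by simp
    moreover have "sqrt (8 * real n * real p) = 2 * sqrt (2 * real n * real p)"
    proof -
      have "sqrt (8 * real n * real p) = sqrt (4 * (2 * real n * real p))" by simp
      also have "\<dots> = sqrt 4 * sqrt (2 * real n * real p)" by (rule real_sqrt_mult)
      finally show ?thesis by simp
    qed
    ultimately have "2 * sqrt (real ((j0 + n) * p + 1)) \<le> real n * \<alpha>" using s1 by linarith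
    moreover have "0 < sqrt (real ((j0 + n) * p + 1))" by (simp del: of_nat_add of_nat_mult)
    ultimately show ?thesis unfolding a_def by (simp add: field_simps)
  qed
  define j1 where "j1 = j0 + n"
  have y1: "y j1 \<ge> 1 - \<delta> / 2"
  proof -
    have "y j0 \<ge> -1" using Xrange by (simp add: y_def)
    thus ?thesis using grow[of n] big d by (simp add: j1_def min_def split: if_splits)
  qed
  have stay: "y (j1 + i) \<ge> 1 - \<delta> / 2" for i
  proof (induction i)
    case 0 thus ?case using y1 by simp
  next
    case (Suc i)
    have "y (Suc (j1 + i)) \<ge> min (y (j1 + i) + a (j1 + i)) (1 - \<delta> / 2)" by (rule ystep) (simp add: j1_def)
    thus ?case using Suc a_pos[of "j1 + i"] by simp
  qed
  have "\<forall>m \<ge> j1 * p. X m \<ge> 1 - \<delta>"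
  proof (intro allI impI)
    fix m assume m: "m \<ge> j1 * p"
    define j where "j = m div p"
    define l where "l = m mod p"
    have mj: "m = j * p + l" by (simp add: j_def l_def)
    have jj: "j \<ge> j1" using m p2 unfolding j_def
      by (metis div_le_mono div_mult_self_is_m less_le_trans pos2)
    have j1: "j \<ge> 1" using jj j0_1 by (simp add: j1_def)
    have l: "l \<le> p" using p2 by (simp add: l_def less_imp_le)
    have "X m \<ge> y j - a j * B" using in_per[OF j1 l] mj by simp
    moreover have "y j \<ge> 1 - \<delta> / 2" using stay[of "j - j1"] jj by simp
    moreover have "a j * B \<le> \<delta> / 2" using ajB[of j] jj by (simp add: j1_def)
    ultimately show "X m \<ge> 1 - \<delta>" by linarith
  qed
  thus ?thesis by blast
qed

end


context cex2 begin

lemma Ssum: "(\<Sum>t=1..T. g t) = real (T div p) + (if T mod p = 0 then 0 else C - real (T mod p - 1))"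
proof (induction T)
  case 0 thus ?case by simp
next
  case (Suc T)
  have e: "(\<Sum>t=1..Suc T. g t) = (\<Sum>t=1..T. g t) + g (Suc T)" by (simp add: sum.cl_ivl_Suc)
  have mlt: "T mod p < p" using p2 by simp
  show ?case
  proof (cases "T mod p = 0")
    case True
    have "Suc T mod p = 1" using True p2 by (simp add: mod_Suc)
    moreover have "Suc T div p = T div p" using True p2 by (simp add: div_Suc mod_Suc)
    ultimately show ?thesis using e Suc True by (simp add: gS)
  next
    case False
    show ?thesis
    proof (cases "Suc (T mod p) = p")
      case True
      have "Suc T mod p = 0" using True by (simp add: mod_Suc)
      moreover have "Suc T div p = Suc (T div p)" using True by (simp add: div_Suc mod_Suc)
      moreover have "C - real (T mod p - 1) - 1 = 1" using True False unfolding C_def by (simp add: of_nat_diff)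
      ultimately show ?thesis using e Suc False by (simp add: gS)
    next
      case F2: False
      have "Suc T mod p = Suc (T mod p)" using F2 by (simp add: mod_Suc)
      moreover have "Suc T div p = T div p" using F2 by (simp add: div_Suc mod_Suc)
      moreover have "C - real (T mod p - 1) - 1 = C - real (Suc (T mod p) - 1)" using False by (simp add: of_nat_diff)
      ultimately show ?thesis using e Suc False by (simp add: gS)
    qed
  qed
qed

lemma Sge: "(\<Sum>t=1..T. g t) \<ge> real T / real p - 1"
proof -
  have mlt: "T mod p < p" using p2 by simp
  have "C - real (T mod p - 1) \<ge> 0" using mlt unfolding C_def by linarith
  hence s: "(\<Sum>t=1..T. g t) \<ge> real (T div p)" using Ssum[of T] by (simp split: if_splits)
  have "T = T div p * p + T mod p" by simp
  hence "real T = real (T div p) * real p + real (T mod p)" by (metis of_nat_add of_nat_mult)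
  hence "real T \<le> real (T div p) * real p + real p" using mlt by simp
  hence "real T / real p \<le> real (T div p) + 1" using p2 by (simp add: field_simps)
  thus ?thesis using s by linarith
qed

lemma gval: "g t = C \<or> g t = -1" by (simp add: g_def gcx_def C_def)

lemma regret_ge: "adam_regret \<alpha> b1 b2 (fcx p) {-1..1} 0 T \<ge> (\<Sum>t=1..T. g t * (X (t - 1) + 1))"
proof -
  let ?h = "\<lambda>x. \<Sum>t=1..T. fcx p t x"
  have bdd: "bdd_below (?h ` {-1..1})"
  proof (rule bdd_belowI)
    fix z assume "z \<in> ?h ` {-1..1}"
    then obtain x where x: "x \<in> {-1..1}" "z = ?h x" by auto
    have "(\<Sum>t=1..T. - C) \<le> ?h x"
    proof (rule sum_mono)
      fix t
      have "C * (-1) \<le> C * x" using x C1 by (intro mult_left_mono) auto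
      hence "- C \<le> g t * x" using gval[of t] x C1 by auto
      thus "- C \<le> fcx p t x" by (simp add: fcx_def g_def)
    qed
    thus "(\<Sum>t=1..T. - C) \<le> z" using x by simp
  qed
  have "(INF x\<in>{-1..1}. ?h x) \<le> ?h (-1)" by (rule cINF_lower[OF bdd]) simp
  also have "?h (-1) = - (\<Sum>t=1..T. g t)" by (simp add: fcx_def g_def sum_negf)
  finally have inf: "(INF x\<in>{-1..1}. ?h x) \<le> - (\<Sum>t=1..T. g t)" .
  have ax: "adam_x \<alpha> b1 b2 (fcx p) {-1..1} 0 t = X (t - 1)" for t
    by (simp add: adam_x_def X_def st_def)
  have "adam_regret \<alpha> b1 b2 (fcx p) {-1..1} 0 T = (\<Sum>t=1..T. g t * X (t - 1)) - (INF x\<in>{-1..1}. ?h x)"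
    by (simp add: adam_regret_def ax fcx_def g_def)
  also have "\<dots> \<ge> (\<Sum>t=1..T. g t * X (t - 1)) + (\<Sum>t=1..T. g t)" using inf by linarith
  finally show ?thesis by (simp add: algebra_simps sum.distrib)
qed

lemma notlim: "\<not> ((\<lambda>T. adam_regret \<alpha> b1 b2 (fcx p) {-1..1} 0 T / real T) \<longlonglongrightarrow> 0)"
proof
  assume lim: "(\<lambda>T. adam_regret \<alpha> b1 b2 (fcx p) {-1..1} 0 T / real T) \<longlonglongrightarrow> 0"
  define \<delta> where "\<delta> = 1 / (C * real p)"
  have d0: "\<delta> > 0" using C1 p2 by (simp add: \<delta>_def)
  have Cd: "C * \<delta> = 1 / real p" using C1 by (simp add: \<delta>_def)
  obtain N where N: "\<And>n. n \<ge> N \<Longrightarrow> X n \<ge> 1 - \<delta>" using high[OF d0] by blast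
  have lowT: "adam_regret \<alpha> b1 b2 (fcx p) {-1..1} 0 T \<ge> real T / real p - 2 - 4 * C * real N" for T
  proof -
    have trm: "g t * (X (t - 1) + 1) \<ge> 2 * g t - C * \<delta> - (if t \<le> N then 4 * C else 0)" if t: "t \<in> {1..T}" for t
    proof (cases "t \<le> N")
      case True
      have "0 \<le> C * (X (t - 1) + 1)" using Xrange[of "t - 1"] C1 by simp
      hence "g t * (X (t - 1) + 1) \<ge> -2" using Xrange[of "t - 1"]
        by (cases "g t = C") (use gval[of t] in \<open>simp_all\<close>)
      moreover have "g t \<le> C" using gval[of t] C1 by auto
      moreover have "C * \<delta> \<ge> 0" using C1 d0 by simp
      ultimately show ?thesis using True C1 by simp
    next
      case False
      have x: "X (t - 1) \<ge> 1 - \<delta>" using N[of "t - 1"] False by simp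
      have "C * \<delta> \<ge> 0" using C1 d0 by simp
      moreover have "C * (X (t - 1) + 1) \<ge> C * (2 - \<delta>)" using x C1 by (intro mult_left_mono) auto
      ultimately show ?thesis using gval[of t] Xrange[of "t - 1"] False by (auto simp: algebra_simps)
    qed
    have cnt: "(\<Sum>t=1..T. (if t \<le> N then 4 * C else 0)) \<le> 4 * C * real N"
    proof -
      have "(\<Sum>t=1..T. (if t \<le> N then 4 * C else 0)) = (\<Sum>t\<in>{t\<in>{1..T}. t \<le> N}. 4 * C)"
        by (rule sum.inter_filter[symmetric]) simp
      also have "\<dots> = 4 * C * real (card {t\<in>{1..T}. t \<le> N})" by simp
      also have "card {t\<in>{1..T}. t \<le> N} \<le> card {1..N}" by (intro card_mono) auto
      hence "4 * C * real (card {t\<in>{1..T}. t \<le> N}) \<le> 4 * C * real N" using C1 by (intro mult_left_mono) auto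
      finally show ?thesis .
    qed
    have TC: "real T * (C * \<delta>) = real T / real p" using Cd by simp
    have "(\<Sum>t=1..T. g t * (X (t - 1) + 1)) \<ge> (\<Sum>t=1..T. 2 * g t - C * \<delta> - (if t \<le> N then 4 * C else 0))"
      using trm by (intro sum_mono) auto
    also have "(\<Sum>t=1..T. 2 * g t - C * \<delta> - (if t \<le> N then 4 * C else 0))
        = 2 * (\<Sum>t=1..T. g t) - real T * (C * \<delta>) - (\<Sum>t=1..T. (if t \<le> N then 4 * C else 0))"
      by (simp add: sum_subtractf sum_distrib_left)
    finally have h: "(\<Sum>t=1..T. g t * (X (t - 1) + 1)) \<ge> 2 * (\<Sum>t=1..T. g t) - real T / real p - (\<Sum>t=1..T. (if t \<le> N then 4 * C else 0))"
      by (simp only: TC)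
    have lin: "2 * s - u - q \<le> z \<Longrightarrow> a - 1 \<le> s \<Longrightarrow> q \<le> w \<Longrightarrow> 2 * (a - 1) - u - w \<le> z"
      for z s u q a w :: real
    proof -
      assume h1: "2 * s - u - q \<le> z" and h2: "a - 1 \<le> s" and h3: "q \<le> w"
      from h2 have "2 * (a - 1) \<le> 2 * s" by simp
      thus ?thesis using h1 h3 by simp
    qed
    have "(\<Sum>t=1..T. g t * (X (t - 1) + 1)) \<ge> 2 * (real T / real p - 1) - real T / real p - 4 * C * real N"
      by (rule lin[OF h Sge[of T] cnt])
    hence h2: "2 * (real T / real p - 1) - real T / real p - 4 * C * real N \<le> adam_regret \<alpha> b1 b2 (fcx p) {-1..1} 0 T"
      by (rule order_trans[OF _ regret_ge[of T]])
    have eq: "real T / real p - 2 - 4 * C * real N = 2 * (real T / real p - 1) - real T / real p - 4 * C * real N"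
      by (simp add: algebra_simps)
    show ?thesis unfolding eq by (rule h2)
  qed
  define c where "c = 2 + 4 * C * real N"
  have c0: "c \<ge> 0" using C1 by (simp add: c_def)
  have "\<forall>\<^sub>F T in sequentially. \<bar>adam_regret \<alpha> b1 b2 (fcx p) {-1..1} 0 T / real T - 0\<bar> < 1 / (2 * real p)"
    using lim p2 unfolding tendsto_iff dist_real_def by (auto)
  then obtain M where M: "\<And>T. T \<ge> M \<Longrightarrow> \<bar>adam_regret \<alpha> b1 b2 (fcx p) {-1..1} 0 T / real T\<bar> < 1 / (2 * real p)"
    unfolding eventually_sequentially by auto
  define T where "T = M + 1 + nat \<lceil>2 * real p * c\<rceil>"
  have T1: "real T \<ge> 1" "real T \<ge> 2 * real p * c" unfolding T_def by linarith+
  have Tp: "0 < real T" using T1 by simp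
  have "adam_regret \<alpha> b1 b2 (fcx p) {-1..1} 0 T \<ge> real T / real p - c" using lowT[of T] by (simp add: c_def)
  moreover have "real T / real p - c \<ge> real T / (2 * real p)"
  proof -
    have "c \<le> real T / (2 * real p)" using T1 p2 by (simp add: field_simps)
    thus ?thesis by (simp add: field_simps)
  qed
  ultimately have "adam_regret \<alpha> b1 b2 (fcx p) {-1..1} 0 T / real T \<ge> 1 / (2 * real p)"
    using Tp by (simp add: field_simps)
  moreover have "\<bar>adam_regret \<alpha> b1 b2 (fcx p) {-1..1} 0 T / real T\<bar> < 1 / (2 * real p)" using M[of T] by (simp add: T_def)
  ultimately show False by linarith
qed

end


lemma exK:
  fixes b1 b2 :: real
  assumes "0 \<le> b1" "b1 < 1" "0 < b2" "b2 < 1"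
  shows "\<exists>K::nat. K \<ge> 1 \<and> b2 ^ K * (2 * real K)^2 \<le> 1 \<and>
     real K * (1 - b1) / 4 \<ge> 1 / (sqrt (1 - b2) * (1 - b1 / sqrt b2)) + 1"
proof -
  define Q where "Q = 1 / (sqrt (1 - b2) * (1 - b1 / sqrt b2)) + 1"
  have n: "norm (sqrt b2) < 1" using assms by simp
  have "(\<lambda>n. of_nat n * sqrt b2 ^ n) \<longlonglongrightarrow> 0" by (rule powser_times_n_limit_0[OF n])
  hence "(\<lambda>n. 4 * (of_nat n * sqrt b2 ^ n)^2) \<longlonglongrightarrow> 4 * 0^2"
    by (intro tendsto_intros)
  hence "\<forall>\<^sub>F n in sequentially. 4 * (of_nat n * sqrt b2 ^ n)^2 < 1"
    by (rule order_tendstoD) simp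
  moreover have "\<forall>\<^sub>F n in sequentially. n \<ge> nat \<lceil>4 * Q / (1 - b1)\<rceil> + 1"
    by (rule eventually_ge_at_top)
  ultimately have "\<forall>\<^sub>F n in sequentially. 4 * (of_nat n * sqrt b2 ^ n)^2 < 1 \<and> n \<ge> nat \<lceil>4 * Q / (1 - b1)\<rceil> + 1"
    by (rule eventually_conj)
  then obtain K where K: "4 * (real K * sqrt b2 ^ K)^2 < 1" "K \<ge> nat \<lceil>4 * Q / (1 - b1)\<rceil> + 1"
    unfolding eventually_sequentially by auto
  have sq: "(sqrt b2 ^ K)^2 = (sqrt b2 ^ 2)^K" by (metis power_mult mult.commute)
  have "(sqrt b2 ^ 2) = b2" using assms by simp
  hence "(sqrt b2 ^ K)^2 = b2 ^ K" using sq by simp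
  hence "b2 ^ K * (2 * real K)^2 = 4 * (real K * sqrt b2 ^ K)^2"
    by (simp add: power_mult_distrib)
  hence c1: "b2 ^ K * (2 * real K)^2 \<le> 1" using K(1) by simp
  have "real K \<ge> 4 * Q / (1 - b1)" using K(2) by linarith
  hence "real K * (1 - b1) \<ge> 4 * Q" using assms by (simp add: field_simps)
  hence c2: "real K * (1 - b1) / 4 \<ge> Q" by simp
  have "K \<ge> 1" using K(2) by simp
  thus ?thesis using c1 c2 unfolding Q_def by blast
qed

theorem theorem2:
  fixes \<beta>1 \<beta>2 :: real
  assumes "0 \<le> \<beta>1" "\<beta>1 < 1" "0 \<le> \<beta>2" "\<beta>2 < 1" "\<beta>1 < sqrt \<beta>2"
  shows "\<exists>(F :: real set) (f :: nat \<Rightarrow> real \<Rightarrow> real) x1.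
           compact F \<and> convex F \<and> x1 \<in> F \<and>
           (\<forall>t. convex_on UNIV (f t)) \<and>
           (\<forall>t x. f t differentiable (at x)) \<and>
           (\<exists>G. \<forall>t x. \<bar>deriv (f t) x\<bar> \<le> G) \<and>
           (\<forall>\<alpha>>0. \<not> ((\<lambda>T. adam_regret \<alpha> \<beta>1 \<beta>2 f F x1 T / real T) \<longlonglongrightarrow> 0))"
proof -
  have b2: "0 < \<beta>2" using assms(1,3,5) by (cases "\<beta>2 = 0") auto
  obtain K where K: "K \<ge> 1" "\<beta>2 ^ K * (2 * real K)^2 \<le> 1"
     "real K * (1 - \<beta>1) / 4 \<ge> 1 / (sqrt (1 - \<beta>2) * (1 - \<beta>1 / sqrt \<beta>2)) + 1"
    using exK[OF assms(1,2) b2 assms(4)] by blast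
  have reg: "\<not> ((\<lambda>T. adam_regret \<alpha> \<beta>1 \<beta>2 (fcx (2 * K)) {-1..1} 0 T / real T) \<longlonglongrightarrow> 0)"
    if al: "\<alpha> > 0" for \<alpha>
  proof -
    interpret cex2 \<beta>1 \<beta>2 \<alpha> K
      by unfold_locales (use assms b2 al K in auto)
    show ?thesis using notlim by (simp add: p_def)
  qed
  have bd: "\<bar>deriv (fcx (2 * K) t) x\<bar> \<le> real (2 * K)" for t x
    using K(1) by (simp add: deriv_fcx gcx_def)
  show ?thesis
    apply (rule exI[of _ "{-1..1}"], rule exI[of _ "fcx (2 * K)"], rule exI[of _ 0])
    using reg bd convex_fcx diff_fcx by auto
qed


end
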